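(* Let $n\ge1$, $0<\hat\theta<1$ with $n\hat\theta$ an integer, and $\alpha>0$. Define $\Delta=\tfrac12\log(n+1)-H_n(\hat\theta)$ and suppose $\alpha+\Delta\le n\hat\theta^2(1-\hat\theta)^2/8$. Then there is a solution $\gamma_\alpha>0$ of $-\log P_{\mathrm{PBR},n}\big(\hat\theta\,\big|\,\varphi(\gamma_\alpha,\hat\theta)\big)=\alpha$ satisfying $$\gamma_\alpha\in\sqrt{2(\alpha+\Delta)}\left(1+\frac52\frac{\sqrt{\alpha+\Delta}}{\sqrt{n\hat\theta(1-\hat\theta)}}[-1,1]\right)^{-1/2},$$ i.e. $\sqrt{2(\alpha+\Delta)}(1+\epsilon)^{-1/2}\le\gamma_\alpha\le\sqrt{2(\alpha+\Delta)}(1-\epsilon)^{-1/2}$ with $\epsilon=\frac52\sqrt{\alpha+\Delta}/\sqrt{n\hat\theta(1-\hat\theta)}$.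
   Context: Logarithms are natural. $H_n(t)=-nt\log t-n(1-t)\log(1-t)-\log\binom{n}{nt}-\tfrac12\log(n+1)$. $P_{\mathrm{PBR},n}(t|\varphi)=\varphi^{nt}(1-\varphi)^{n(1-t)}(n+1)\binom{n}{nt}$ if $t\ge\varphi$, and $=t^{nt}(1-t)^{n(1-t)}(n+1)\binom{n}{nt}$ otherwise. With $\hat\sigma=\sqrt{\hat\theta(1-\hat\theta)/n}$, $\varphi(\gamma,\hat\theta)=\hat\theta-\hat\sigma\gamma$. *)

theory Defs
  imports "HOL-Analysis.Analysis"
begin

text \<open>Throughout, t is a real in [0,1] with n*t an integer; the integer n*t is
  represented as nat (floor (n*t)) (exact under that hypothesis).\<close>

definition cnt :: "nat \<Rightarrow> real \<Rightarrow> nat" where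
  "cnt n t = nat \<lfloor>real n * t\<rfloor>"

definition H :: "nat \<Rightarrow> real \<Rightarrow> real" where
  "H n t = - real n * t * ln t - real n * (1 - t) * ln (1 - t)
           - ln (real (n choose cnt n t)) - ln (real n + 1) / 2"

definition P_PBR :: "nat \<Rightarrow> real \<Rightarrow> real \<Rightarrow> real" where
  "P_PBR n t phi =
     (if t \<ge> phi
      then phi ^ cnt n t * (1 - phi) ^ (n - cnt n t) * (real n + 1) * real (n choose cnt n t)
      else t ^ cnt n t * (1 - t) ^ (n - cnt n t) * (real n + 1) * real (n choose cnt n t))"

definition sigma_hat :: "nat \<Rightarrow> real \<Rightarrow> real" where
  "sigma_hat n th = sqrt (th * (1 - th) / real n)"

definition phi :: "nat \<Rightarrow> real \<Rightarrow> real \<Rightarrow> real" where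
  "phi n g th = th - sigma_hat n th * g"

end

theory Submission
  imports Defs
begin

lemma L1: fixes a :: real assumes "0 \<le> a" "a \<le> 1/4"
  shows "- ln (1 - a) \<le> a + a^2/2 + 4/9 * a^3"
proof -
  let ?h = "\<lambda>x::real. x + x^2/2 + 4/9*x^3 + ln (1 - x)"
  have "?h 0 \<le> ?h a"
  proof (rule DERIV_nonneg_imp_nondecreasing[OF assms(1)])
    fix x :: real assume x: "0 \<le> x" "x \<le> a"
    have "DERIV ?h x :> 1 + x + 4/3*x^2 - 1/(1-x)"
      using x assms by (auto intro!: derivative_eq_intros simp: field_simps power2_eq_square)
    moreover have "1 + x + 4/3*x^2 - 1/(1-x) \<ge> 0"
    proof -
      have eq: "(1-x)*(1 + x + 4/3*x^2) = 1 + x^2*(1/3 - 4/3*x)"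
        by (simp add: field_simps power2_eq_square)
      have "0 \<le> x^2*(1/3 - 4/3*x)" using x assms by (intro mult_nonneg_nonneg) auto
      hence "(1-x)*(1 + x + 4/3*x^2) \<ge> 1" unfolding eq by linarith
      then show ?thesis using x assms by (simp add: field_simps)
    qed
    ultimately show "\<exists>y. DERIV ?h x :> y \<and> y \<ge> 0" by blast
  qed
  then show ?thesis by simp
qed

lemma L2: fixes b :: real assumes "0 \<le> b"
  shows "ln (1 + b) \<le> b - b^2/2 + b^3/3"
proof -
  let ?h = "\<lambda>x::real. x - x^2/2 + x^3/3 - ln (1 + x)"
  have "?h 0 \<le> ?h b"
  proof (rule DERIV_nonneg_imp_nondecreasing[OF assms(1)])
    fix x :: real assume x: "0 \<le> x" "x \<le> b"
    have d: "DERIV ?h x :> 1 - x + x^2 - 1/(1+x)"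
      using x assms by (auto intro!: derivative_eq_intros simp: field_simps power2_eq_square)
    have e: "1 - x + x^2 - 1/(1+x) = x^3/(1+x)" using x by (simp add: field_simps power2_eq_square power3_eq_cube)
    have p: "x^3/(1+x) \<ge> 0" using x by simp
    show "\<exists>y. DERIV ?h x :> y \<and> y \<ge> 0" using d p unfolding e by blast
  qed
  then show ?thesis by simp
qed

lemma L3: fixes a :: real assumes "0 \<le> a" "a < 1"
  shows "a + a^2/2 + a^3/3 \<le> - ln (1 - a)"
proof -
  let ?h = "\<lambda>x::real. - ln (1 - x) - x - x^2/2 - x^3/3"
  have "?h 0 \<le> ?h a"
  proof (rule DERIV_nonneg_imp_nondecreasing[OF assms(1)])
    fix x :: real assume x: "0 \<le> x" "x \<le> a"
    have d: "DERIV ?h x :> 1/(1-x) - 1 - x - x^2"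
      using x assms by (auto intro!: derivative_eq_intros simp: field_simps power2_eq_square)
    have e: "1/(1-x) - 1 - x - x^2 = x^3/(1-x)" using x assms by (simp add: field_simps power2_eq_square power3_eq_cube)
    have p: "x^3/(1-x) \<ge> 0" using x assms by simp
    show "\<exists>y. DERIV ?h x :> y \<and> y \<ge> 0" using d p unfolding e by blast
  qed
  then show ?thesis by simp
qed

lemma L4: fixes b :: real assumes "0 \<le> b"
  shows "b - b^2/2 + b^3/3 - b^4/4 \<le> ln (1 + b)"
proof -
  let ?h = "\<lambda>x::real. ln (1 + x) - (x - x^2/2 + x^3/3 - x^4/4)"
  have "?h 0 \<le> ?h b"
  proof (rule DERIV_nonneg_imp_nondecreasing[OF assms(1)])
    fix x :: real assume x: "0 \<le> x" "x \<le> b"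
    have d: "DERIV ?h x :> 1/(1+x) - (1 - x + x^2 - x^3)"
      using x assms by (auto intro!: derivative_eq_intros simp: field_simps power2_eq_square power3_eq_cube)
    have e: "1/(1+x) - (1 - x + x^2 - x^3) = x^4/(1+x)" using x by (simp add: field_simps power2_eq_square power3_eq_cube power4_eq_xxxx)
    have p: "x^4/(1+x) \<ge> 0" using x by simp
    show "\<exists>y. DERIV ?h x :> y \<and> y \<ge> 0" using d p unfolding e by blast
  qed
  then show ?thesis by simp
qed
lemma ident_half: fixes th q u :: real assumes "th \<noteq> 0" "q \<noteq> 0" "th + q = 1"
  shows "u^2/(2*(th*q)) = u^2/(2*th) + u^2/(2*q)"
proof -
  have "q*u^2+th*u^2 = (q+th)*u^2" by (simp add: algebra_simps)
  also have "\<dots> = u^2" using assms(3) by simp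
  finally have e: "q*u^2+th*u^2 = u^2" .
  show ?thesis using assms e by (simp add: field_simps)
qed

lemma ident_low: fixes th q u :: real assumes "th \<noteq> 0" "q \<noteq> 0" "th + q = 1"
  shows "th * (u/th + (u/th)^2/2 + (u/th)^3/3) + q * (-(u/q - (u/q)^2/2 + (u/q)^3/3))
       = u^2/(2*(th*q)) + u^3/(3*th^2) - u^3/(3*q^2)"
  unfolding ident_half[OF assms] using assms(1,2) by (simp add: field_simps power2_eq_square power3_eq_cube)

lemma ident_up: fixes th q u :: real assumes "th \<noteq> 0" "q \<noteq> 0" "th + q = 1"
  shows "th * (u/th + (u/th)^2/2 + 4/9 * (u/th)^3) + q * (-(u/q - (u/q)^2/2))
       = u^2/(2*(th*q)) + 4/9 * u^3/th^2"
  unfolding ident_half[OF assms] using assms(1,2) by (simp add: field_simps power2_eq_square power3_eq_cube)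

definition KL :: "real \<Rightarrow> real \<Rightarrow> real" where
  "KL th u = th * (ln th - ln (th - u)) + (1-th) * (ln (1-th) - ln (1-th+u))"

lemma KL_split:
  fixes th u :: real assumes "0 < th" "th < 1" "0 \<le> u" "u < th"
  shows "KL th u = th * (- ln (1 - u/th)) + (1-th) * (- ln (1 + u/(1-th)))"
proof -
  have "th - u = th * (1 - u/th)" using assms by (simp add: field_simps)
  moreover have "0 < 1 - u/th" using assms by (simp add: field_simps)
  moreover have "ln (th * (1 - u/th)) = ln th + ln (1 - u/th)" using assms calculation(2) by (simp add: ln_mult)
  ultimately have 1: "ln (th - u) = ln th + ln (1 - u/th)" by simp
  have "1 - th + u = (1-th) * (1 + u/(1-th))" using assms by (simp add: field_simps)
  moreover have "ln ((1-th) * (1 + u/(1-th))) = ln (1-th) + ln (1 + u/(1-th))" using assms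
    by (intro ln_mult_pos) (auto simp: add_pos_nonneg)
  ultimately have 2: "ln (1 - th + u) = ln (1-th) + ln (1 + u/(1-th))" by simp
  show ?thesis unfolding KL_def 1 2 by simp
qed

lemma KL_upper:
  fixes th u :: real assumes "0 < th" "th < 1" "0 \<le> u" "u \<le> th*(1-th)/4"
  shows "KL th u \<le> u^2/(2*(th*(1-th))) + 4/9 * u^3/th^2"
proof -
  define a where "a = u/th"
  define b where "b = u/(1-th)"
  have c1: "th*(1-th) \<le> th" "th*(1-th) \<le> 1 - th" using assms by (auto simp: mult_le_cancel_left1 mult_le_cancel_right1)
  have ut: "u < th" using assms c1 by linarith
  have "u \<le> th/4" using assms c1 by linarith
  hence a0: "0 \<le> a" "a \<le> 1/4" using assms unfolding a_def by (auto simp: field_simps)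
  have b0: "0 \<le> b" "b \<le> 1" using assms c1 unfolding b_def by (auto simp: field_simps)
  have A: "th * (- ln (1 - a)) \<le> th * (a + a^2/2 + 4/9 * a^3)"
    using L1[OF a0] assms by (intro mult_left_mono) auto
  have B: "(1-th) * (- ln (1 + b)) \<le> (1-th) * (-(b - b^2/2 + b^3/3 - b^4/4))"
    using L4[OF b0(1)] assms by (intro mult_left_mono) auto
  have B2: "b^4/4 \<le> b^3/3"
  proof -
    have "b^4 \<le> b^3" using b0 by (simp add: power_decreasing)
    moreover have "0 \<le> b^3" using b0 by simp
    ultimately show ?thesis by linarith
  qed
  have "KL th u \<le> th * (a + a^2/2 + 4/9 * a^3) + (1-th) * (-(b - b^2/2 + b^3/3 - b^4/4))"
    using KL_split[OF assms(1,2,3) ut] A B unfolding a_def b_def by linarith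
  also have "\<dots> \<le> th * (a + a^2/2 + 4/9 * a^3) + (1-th) * (-(b - b^2/2))"
    using B2 assms by (intro add_left_mono mult_left_mono) auto
  also have "\<dots> = u^2/(2*(th*(1-th))) + 4/9 * u^3/th^2"
    unfolding a_def b_def by (rule ident_up) (use assms in auto)
  finally show ?thesis .
qed

lemma KL_lower:
  fixes th u :: real assumes "0 < th" "th < 1" "0 \<le> u" "u < th*(1-th)"
  shows "u^2/(2*(th*(1-th))) - u^3/(3*(th*(1-th))^2) \<le> KL th u"
proof -
  define a where "a = u/th"
  define b where "b = u/(1-th)"
  have c1: "th*(1-th) \<le> th" "th*(1-th) \<le> 1 - th" using assms by (auto simp: mult_le_cancel_left1 mult_le_cancel_right1)
  have ut: "u < th" using assms c1 by linarith
  have nz: "th \<noteq> 0" "1 - th \<noteq> 0" using assms by auto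
  have a0: "0 \<le> a" "a < 1" using assms ut unfolding a_def by (auto simp: field_simps)
  have b0: "0 \<le> b" using assms unfolding b_def by (auto simp: field_simps)
  have A: "th * (a + a^2/2 + a^3/3) \<le> th * (- ln (1 - a))"
    using L3[OF a0] assms by (intro mult_left_mono) auto
  have B: "(1-th) * (-(b - b^2/2 + b^3/3)) \<le> (1-th) * (- ln (1 + b))"
    using L2[OF b0(1)] assms by (intro mult_left_mono) auto
  have "u^2/(2*(th*(1-th))) - u^3/(3*(th*(1-th))^2) \<le> u^2/(2*(th*(1-th))) - u^3/(3*(1-th)^2)"
  proof -
    have "(th*(1-th))^2 \<le> (1-th)^2" using c1 assms by (intro power_mono) auto
    hence "u^3/(3*(1-th)^2) \<le> u^3/(3*(th*(1-th))^2)" using assms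
      by (intro divide_left_mono) auto
    then show ?thesis by linarith
  qed
  also have "\<dots> \<le> th * (a + a^2/2 + a^3/3) + (1-th) * (-(b - b^2/2 + b^3/3))"
  proof -
    have "th * (a + a^2/2 + a^3/3) + (1-th) * (-(b - b^2/2 + b^3/3))
       = u^2/(2*(th*(1-th))) + u^3/(3*th^2) - u^3/(3*(1-th)^2)"
      unfolding a_def b_def by (rule ident_low[OF nz]) simp
    moreover have "u^3/(3*th^2) \<ge> 0" using assms by simp
    ultimately show ?thesis by linarith
  qed
  also have "\<dots> \<le> KL th u"
    using KL_split[OF assms(1,2,3) ut] A B unfolding a_def b_def by linarith
  finally show ?thesis .
qed

lemma binom_ratio: "j < n \<Longrightarrow> (n - j) * (n choose j) = Suc j * (n choose Suc j)"
  using binomial_absorb_comp binomial_absorption by presburger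

lemma binom_mode:
  fixes th :: real and n k :: nat
  assumes "0 < th" "th < 1" "real k = real n * th"
  shows "1 \<le> (real n + 1) * (real (n choose k) * th ^ k * (1-th) ^ (n-k))"
proof -
  define b where "b j = real (n choose j) * th ^ j * (1-th) ^ (n-j)" for j
  have kn: "k \<le> n" using assms by (metis of_nat_le_iff mult.commute mult_left_le mult_le_one less_le order.refl of_nat_0_le_iff)
  have rec: "b (Suc j) * (real j + 1) * (1 - th) = b j * (real n - real j) * th" if "j < n" for j
  proof -
    have e: "real (n - j) * real (n choose j) = (real j + 1) * real (n choose Suc j)"
      using binom_ratio[OF that] by (metis of_nat_Suc of_nat_mult add.commute)
    have nj: "n - j = Suc (n - Suc j)" using that by simp
    have "b (Suc j) * (real j + 1) * (1 - th) = (real j + 1) * real (n choose Suc j) * th ^ Suc j * (1-th) ^ (n - j)"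
      unfolding b_def nj by simp
    also have "\<dots> = real (n - j) * real (n choose j) * th ^ Suc j * (1-th) ^ (n - j)" using e by simp
    also have "\<dots> = b j * (real n - real j) * th" unfolding b_def using that by (simp add: of_nat_diff)
    finally show ?thesis .
  qed
  have bnn: "b j \<ge> 0" for j using assms unfolding b_def by simp
  have up: "b j \<le> b (Suc j)" if "j < k" for j
  proof -
    have jn: "j < n" using that kn by simp
    have "(real j + 1) * (1 - th) \<le> (real n - real j) * th"
    proof -
      have "real j + 1 \<le> real k" using that by simp
      then show ?thesis using assms by (simp add: algebra_simps)
    qed
    hence "b j * ((real j + 1) * (1 - th)) \<le> b j * ((real n - real j) * th)" using bnn by (intro mult_left_mono) auto
    also have "\<dots> = b (Suc j) * ((real j + 1) * (1 - th))" using rec[OF jn] by (simp add: algebra_simps)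
    finally show ?thesis using assms by (simp add: mult_le_cancel_right)
  qed
  have down: "b (Suc j) \<le> b j" if "k \<le> j" "j < n" for j
  proof -
    have "(real n - real j) * th \<le> (real j + 1) * (1 - th)"
    proof -
      have "real k \<le> real j" using that by simp
      then show ?thesis using assms by (simp add: algebra_simps)
    qed
    hence "b j * ((real n - real j) * th) \<le> b j * ((real j + 1) * (1 - th))" using bnn by (intro mult_left_mono) auto
    also have "b j * ((real n - real j) * th) = b (Suc j) * ((real j + 1) * (1 - th))" using rec[OF that(2)] by (simp add: algebra_simps)
    finally show ?thesis using assms by (simp add: mult_le_cancel_right)
  qed
  have le1: "b j \<le> b k" if "j \<le> k" for j
    using that
  proof (induction j rule: inc_induct)
    case base then show ?case by simp
  next
    case (step m) then show ?case using up[of m] by simp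
  qed
  have le2: "b j \<le> b k" if "k \<le> j" "j \<le> n" for j
    using that
  proof (induction j rule: dec_induct)
    case base then show ?case by simp
  next
    case (step m) then show ?case using down[of m] by simp
  qed
  have sum1: "(\<Sum>j\<le>n. b j) = 1"
    using binomial_ring[of th "1-th" n] unfolding b_def by (simp add: mult_ac)
  have "(\<Sum>j\<le>n. b j) \<le> (\<Sum>j\<le>n. b k)"
    by (intro sum_mono) (metis atMost_iff le1 le2 nat_le_linear)
  then have "1 \<le> (real n + 1) * b k" using sum1 by (simp add: add.commute)
  then show ?thesis unfolding b_def by (metis add.commute)
qed
lemma powr_mhalf: fixes x :: real assumes "0 < x" shows "x powr (-1/2) = sqrt (1/x)"
proof -
  have "x powr (-1/2) = inverse (x powr (1/2))" by (simp add: powr_minus[symmetric])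
  also have "\<dots> = sqrt (1/x)" using assms by (simp add: powr_half_sqrt real_sqrt_divide inverse_eq_divide)
  finally show ?thesis .
qed

lemma aux_up: fixes u e c th :: real
  assumes "0 \<le> u" "u \<le> 9/8*e*c" "0 < c" "c \<le> th"
  shows "4/9 * u^3/th^2 \<le> u^2*e/(2*c)"
proof -
  have "c^2 \<le> th^2" using assms by (intro power_mono) auto
  hence "4/9 * u^3/th^2 \<le> 4/9 * u^3/c^2" using assms by (intro divide_left_mono) auto
  also have "4/9 * u^3/c^2 = u^2 * (4/9*u) / c^2" by (simp add: power2_eq_square power3_eq_cube)
  also have "\<dots> \<le> u^2 * (e*c/2) / c^2" using assms by (intro divide_right_mono mult_left_mono) auto
  also have "\<dots> = u^2*e/(2*c)" using assms by (simp add: power2_eq_square field_simps)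
  finally show ?thesis .
qed

lemma aux_low: fixes u e c :: real
  assumes "0 \<le> u" "u \<le> 4/5*e*c" "0 < c"
  shows "u^3/(3*c^2) \<le> u^2*e/(2*c)"
proof -
  have "0 \<le> 4/5*e*c" using assms by linarith
  hence "0 \<le> e * c" by (simp add: mult.commute)
  hence e0: "0 \<le> e" using assms by (simp add: zero_le_mult_iff)
  have "u^3/(3*c^2) = u^2 * u / (3*c^2)" by (simp add: power2_eq_square power3_eq_cube)
  also have "\<dots> \<le> u^2 * (4/5*e*c) / (3*c^2)" using assms by (intro divide_right_mono mult_left_mono) auto
  also have "\<dots> = u^2*e/c * (4/15)" using assms by (simp add: power2_eq_square field_simps)
  also have "\<dots> \<le> u^2*e/c * (1/2)" using assms e0 by (intro mult_left_mono) auto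
  also have "\<dots> = u^2*e/(2*c)" by simp
  finally show ?thesis .
qed
theorem mainTheorem12:
  fixes n :: nat and th alpha :: real
  assumes "n \<ge> 1" and "0 < th" and "th < 1" and "real n * th \<in> \<int>" and "alpha > 0"
    and "alpha + (ln (real n + 1) / 2 - H n th) \<le> real n * th\<^sup>2 * (1 - th)\<^sup>2 / 8"
  shows "\<exists>g > 0. - ln (P_PBR n th (phi n g th)) = alpha \<and>
     (let D = ln (real n + 1) / 2 - H n th;
          eps = 5 / 2 * sqrt (alpha + D) / sqrt (real n * th * (1 - th))
      in sqrt (2 * (alpha + D)) * (1 + eps) powr (-1/2) \<le> g \<and>
         g \<le> sqrt (2 * (alpha + D)) * (1 - eps) powr (-1/2))"
proof -
  note th0 = assms(2) and th1 = assms(3)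
  have n0: "real n > 0" using assms(1) by simp
  obtain z :: int where z: "real n * th = of_int z" using assms(4) by (auto elim: Ints_cases)
  have z0: "z \<ge> 0" using z n0 th0 by (metis of_int_0_le_iff mult_nonneg_nonneg less_imp_le of_nat_0_le_iff)
  define k where "k = nat z"
  have k: "real k = real n * th" using z z0 unfolding k_def by simp
  have cnt: "cnt n th = k" unfolding cnt_def k[symmetric] by simp
  have kn: "k \<le> n"
  proof -
    have "real n * th \<le> real n" using th1 n0 by simp
    then show ?thesis using k by simp
  qed
  have nk: "real (n - k) = real n * (1 - th)" using kn k by (simp add: of_nat_diff algebra_simps)
  define C where "C = real (n choose k)"
  have C0: "C > 0" unfolding C_def using kn by simp
  define c where "c = th * (1 - th)"
  have c0: "c > 0" unfolding c_def using th0 th1 by simp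
  have cth: "c \<le> th" "c \<le> 1 - th" unfolding c_def using th0 th1 by (auto simp: mult_le_cancel_left1 mult_le_cancel_right1)
  have c4: "c \<le> 1/4"
  proof -
    have "0 \<le> (th - 1/2)^2" by simp
    then show ?thesis unfolding c_def by (simp add: power2_eq_square algebra_simps)
  qed
  define sg where "sg = sigma_hat n th"
  have sg0: "sg > 0" unfolding sg_def sigma_hat_def using th0 th1 n0 by simp
  have sg2: "sg^2 = c / real n" unfolding sg_def sigma_hat_def c_def using th0 th1 n0 by simp
  define D where "D = ln (real n + 1) / 2 - H n th"
  define P0 where "P0 = (real n + 1) * (C * th ^ k * (1-th) ^ (n-k))"
  have P01: "1 \<le> P0" unfolding P0_def C_def by (rule binom_mode[OF th0 th1 k])
  have lnP0: "ln P0 = ln (real n + 1) + ln C + real n * th * ln th + real n * (1 - th) * ln (1 - th)"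
    unfolding P0_def using C0 th0 th1 n0 k nk by (simp add: ln_mult ln_realpow)
  have DP0: "D = ln P0"
    unfolding D_def H_def lnP0 cnt C_def[symmetric] by (simp add: algebra_simps)
  have D0: "D \<ge> 0" using P01 DP0 by simp
  define A where "A = alpha + D"
  have A0: "A > 0" unfolding A_def using D0 assms(5) by simp
  define N where "N = real n * th * (1 - th)"
  have N: "N = real n * c" unfolding N_def c_def by simp
  have N0: "N > 0" using N n0 c0 by simp
  define eps where "eps = 5 / 2 * sqrt A / sqrt N"
  have eps0: "eps \<ge> 0" unfolding eps_def using A0 N0 by simp
  have eps2: "eps^2 = 25/4 * A / N" unfolding eps_def using A0 N0 by (simp add: power_divide power_mult_distrib)
  have AN: "A \<le> real n * c^2 / 8" using assms(6) unfolding A_def D_def c_def by (simp add: power_mult_distrib mult_ac)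
  have eps2b: "eps^2 \<le> 25/128"
  proof -
    have "A / N \<le> c / 8" using AN N0 N n0 c0 by (simp add: field_simps power2_eq_square)
    also have "\<dots> \<le> 1/32" using c4 by simp
    finally show ?thesis using eps2 by simp
  qed
  have epsh: "eps < 1/2"
  proof (rule ccontr)
    assume "\<not> eps < 1/2"
    hence "(1/2)^2 \<le> eps^2" by (intro power_mono) auto
    hence "1/4 \<le> eps^2" by (simp add: power2_eq_square)
    then show False using eps2b by linarith
  qed
  define K where "K = 8/25 * c^2 * eps^2"
  have K: "(c / real n) * (2 * A) = K"
  proof -
    have "A = 4/25 * eps^2 * N" using eps2 N0 by (simp add: field_simps)
    then show ?thesis unfolding K_def N using n0 by (simp add: field_simps power2_eq_square)
  qed
  have K0: "K \<ge> 0" unfolding K_def by simp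
  have Kb: "K \<le> c^2/16"
  proof -
    have "c^2 * eps^2 \<le> c^2 * (25/128)" using eps2b by (intro mult_left_mono) auto
    then show ?thesis unfolding K_def by linarith
  qed
  define gm where "gm = sqrt (2 * A) * (1 + eps) powr (-1/2)"
  define gp where "gp = sqrt (2 * A) * (1 - eps) powr (-1/2)"
  have pe1: "0 < 1 + eps" "0 < 1 - eps" using eps0 epsh by auto
  have gm: "gm = sqrt (2*A/(1+eps))" unfolding gm_def powr_mhalf[OF pe1(1)]
    by (simp add: real_sqrt_mult[symmetric])
  have gp: "gp = sqrt (2*A/(1-eps))" unfolding gp_def powr_mhalf[OF pe1(2)]
    by (simp add: real_sqrt_mult[symmetric])
  have gm0: "gm > 0" unfolding gm using A0 eps0 by simp
  have gmp: "gm \<le> gp" unfolding gm gp using A0 eps0 epsh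
    by (intro real_sqrt_le_mono divide_left_mono) auto
  define um where "um = sg * gm"
  define up where "up = sg * gp"
  have um0: "um \<ge> 0" "up \<ge> 0" unfolding um_def up_def using sg0 gm0 gmp by auto
  have um2: "um^2 = K / (1 + eps)"
  proof -
    have "um^2 = sg^2 * gm^2" unfolding um_def by (simp add: power_mult_distrib)
    also have "\<dots> = (c / real n) * (2 * A / (1 + eps))" unfolding sg2 gm using A0 eps0 by simp
    also have "\<dots> = K / (1 + eps)" using K[symmetric] by simp
    finally show ?thesis .
  qed
  have up2: "up^2 = K / (1 - eps)"
  proof -
    have "up^2 = sg^2 * gp^2" unfolding up_def by (simp add: power_mult_distrib)
    also have "\<dots> = (c / real n) * (2 * A / (1 - eps))" unfolding sg2 gp using A0 epsh by simp
    also have "\<dots> = K / (1 - eps)" using K[symmetric] by simp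
    finally show ?thesis .
  qed
  have um2K: "um^2 \<le> K" unfolding um2 using K0 eps0 by (simp add: divide_le_eq mult_le_cancel_left1)
  have up2K: "up^2 \<le> 2 * K"
  proof -
    have "0 \<le> K*(1 - 2*eps)" using K0 epsh by simp
    hence "K \<le> 2*K*(1-eps)" by (simp add: algebra_simps)
    hence "K / (1 - eps) \<le> 2 * K" using pe1 by (simp add: divide_le_eq)
    then show ?thesis unfolding up2 .
  qed
  have umc: "um \<le> c/4"
    by (rule power2_le_imp_le) (use um2K Kb c0 in \<open>auto simp: power_divide\<close>)
  have um98: "um \<le> 9/8 * eps * c"
  proof (rule power2_le_imp_le)
    have "(9/8 * eps * c)^2 = 81/64*(c^2*eps^2)" by (simp add: power2_eq_square field_simps)
    moreover have "0 \<le> c^2*eps^2" by simp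
    ultimately show "um^2 \<le> (9/8 * eps * c)^2" using um2K unfolding K_def by linarith
  qed (use eps0 c0 in auto)
  have up45: "up \<le> 4/5 * eps * c"
  proof (rule power2_le_imp_le)
    have "(4/5 * eps * c)^2 = 16/25*(c^2*eps^2)" by (simp add: power2_eq_square field_simps)
    then show "up^2 \<le> (4/5 * eps * c)^2" using up2K unfolding K_def by linarith
  qed (use eps0 c0 in auto)
  have upc: "up < c"
  proof -
    have "4/5 * eps * c < c" using epsh eps0 c0 by simp
    then show ?thesis using up45 by simp
  qed
  define F where "F g = real n * KL th (sg * g)" for g
  have Fm: "F gm \<le> A"
  proof -
    have "KL th um \<le> um^2/(2*c) + 4/9 * um^3/th^2"
      using KL_upper[OF th0 th1 um0(1)] umc unfolding c_def by simp
    also have "\<dots> \<le> um^2/(2*c) + um^2*eps/(2*c)"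
      using aux_up[OF um0(1) um98 c0 cth(1)] by simp
    also have "\<dots> = um^2 * (1+eps) / (2*c)" using c0 by (simp add: field_simps)
    also have "\<dots> = K / (2*c)" unfolding um2 using eps0 by simp
    finally have KLm: "KL th um \<le> K / (2*c)" .
    have "real n * KL th um \<le> real n * (K / (2*c))" using KLm n0 by (intro mult_left_mono) auto
    also have "\<dots> = A" unfolding K[symmetric] using n0 c0 by (simp add: field_simps)
    finally show ?thesis unfolding F_def um_def .
  qed
  have Fp: "A \<le> F gp"
  proof -
    have AK: "A = real n * (K / (2*c))" unfolding K[symmetric] using n0 c0 by (simp add: field_simps)
    have "K / (2*c) = up^2 * (1 - eps) / (2*c)" unfolding up2 using epsh by simp
    also have "\<dots> = up^2/(2*c) - up^2*eps/(2*c)" using c0 by (simp add: field_simps)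
    also have "\<dots> \<le> up^2/(2*c) - up^3/(3*c^2)"
      using aux_low[OF um0(2) up45 c0] by simp
    also have "\<dots> \<le> KL th up"
      using KL_lower[OF th0 th1 um0(2)] upc unfolding c_def by simp
    finally have "K / (2*c) \<le> KL th up" .
    hence "A \<le> real n * KL th up" unfolding AK using n0 by (intro mult_left_mono) auto
    then show ?thesis unfolding F_def up_def .
  qed
  have cont: "continuous_on {gm..gp} F"
  proof -
    have "\<forall>g\<in>{gm..gp}. th - sg * g > 0 \<and> 1 - th + sg * g > 0"
    proof
      fix g assume g: "g \<in> {gm..gp}"
      have "sg * g \<le> up" unfolding up_def using g sg0 by (simp add: mult_left_mono)
      moreover have "sg * g \<ge> 0" using g gm0 sg0 by simp
      ultimately show "th - sg * g > 0 \<and> 1 - th + sg * g > 0" using upc cth th1 by linarith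
    qed
    then show ?thesis unfolding F_def KL_def
      by (intro continuous_intros) auto
  qed
  obtain g where g: "gm \<le> g" "g \<le> gp" "F g = A"
    using IVT'[of F gm A gp, OF Fm Fp gmp cont] by blast
  have g0: "g > 0" using g gm0 by simp
  have sgg: "0 \<le> sg * g" "sg * g \<le> up" unfolding up_def using g sg0 g0 by (auto simp: mult_left_mono)
  have ph: "phi n g th = th - sg * g" unfolding phi_def sg_def by simp
  have pos1: "th - sg * g > 0" using sgg upc cth by linarith
  have pos2: "1 - th + sg * g > 0" using sgg th1 by linarith
  have Q: "- ln (P_PBR n th (phi n g th)) = F g - D"
  proof -
    have P: "P_PBR n th (phi n g th) = (th - sg*g) ^ k * (1 - th + sg*g) ^ (n - k) * (real n + 1) * C"
      unfolding P_PBR_def ph cnt C_def using sgg by (simp add: algebra_simps)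
    have "ln (P_PBR n th (phi n g th)) = real n * th * ln (th - sg*g) + real n * (1-th) * ln (1 - th + sg*g) + ln (real n + 1) + ln C"
      unfolding P using pos1 pos2 C0 n0 k nk by (simp add: ln_mult ln_realpow)
    then show ?thesis unfolding F_def KL_def DP0 lnP0 by (simp add: algebra_simps)
  qed
  have "- ln (P_PBR n th (phi n g th)) = alpha" using Q g(3) unfolding A_def by simp
  moreover have "sqrt (2 * (alpha + D)) * (1 + eps) powr (-1/2) \<le> g \<and>
         g \<le> sqrt (2 * (alpha + D)) * (1 - eps) powr (-1/2)"
    using g unfolding gm_def gp_def A_def by simp
  ultimately show ?thesis using g0 unfolding Let_def D_def[symmetric] eps_def A_def N_def
    by blast
qed

end
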